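(* Let $\mu$ be a distribution on $\{0,1\}^{\mathbb{N}}$ and let $X=(X_i)_{i\in\mathbb{N}}\sim\mu$ be defined on a probability space $(\Omega,\mathcal{F},\mathbb{P})$. Then $\mu$ satisfies condition (SC) if and only if it satisfies condition (SC'), where: (SC): $(\mathbb{N},\xi)$ is totally bounded and there exists $K\ge1$ such that for every $\varepsilon>0$ there exist events $(E_k)_{k\in\mathbb{N}}$ in $\mathcal{F}$ and a finite set $J\subset\mathbb{N}$ with (1) $\mathbb{P}(E_k)\le\varepsilon$ for all $k$; (2) $\sup_{k}\frac{\log(k+1)}{\log(1/\mathbb{P}(E_k))}<\infty$; (3) for every $i\in\mathbb{N}$ there exist $j\in J$ and $\mathcal{K}\subset\mathbb{N}$ with $|\mathcal{K}|\le K$ and $\{X_i\neq X_j\}\subset\bigcup_{k\in\mathcal{K}}E_k$. (SC'): $(\mathbb{N},\xi)$ is totally bounded and there exists $K\ge1$ such that for every $\varepsilon>0$ there exist events $(E_k)_{k\in\mathbb{N}}$ in $\mathcal{F}$ and a finite sequence of random variables $(Z_j)_{j\in[J]}$ on $(\Omega,\mathcal{F},\mathbb{P})$ with (1) $\mathbb{P}(E_k)\le\varepsilon$ for all $k$; (2) $\sup_{k}\frac{\log(k+1)}{\log(1/\mathbb{P}(E_k))}<\infty$; (3) for every $i\in\mathbb{N}$ there exist $j\in[J]$ and $\mathcal{K}\subset\mathbb{N}$ with $|\mathcal{K}|\le K$ and $\{X_i\neq Z_j\}\subset\bigcup_{k\in\mathcal{K}}E_k$.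
   Context: $\xi(i,j):=\mathbb{P}(X_i\neq X_j)$; $(\mathbb{N},\xi)$ is totally bounded if for every $\varepsilon>0$ there is a finite $S\subset\mathbb{N}$ such that every $i$ has $s\in S$ with $\xi(i,s)\le\varepsilon$. $[J]=\{1,\dots,J\}$; $\log(1/0)=\infty$. *)

theory Defs
  imports "HOL-Probability.Probability"
begin

definition xi :: "'w measure \<Rightarrow> (nat \<Rightarrow> 'w \<Rightarrow> bool) \<Rightarrow> nat \<Rightarrow> nat \<Rightarrow> real" where
  "xi M X i j = measure M {\<omega> \<in> space M. X i \<omega> \<noteq> X j \<omega>}"

definition xi_totally_bounded :: "'w measure \<Rightarrow> (nat \<Rightarrow> 'w \<Rightarrow> bool) \<Rightarrow> bool" where
  "xi_totally_bounded M X \<longleftrightarrow>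
     (\<forall>\<epsilon>>0. \<exists>S. finite S \<and> (\<forall>i. \<exists>s\<in>S. xi M X i s \<le> \<epsilon>))"

text \<open>sup_k log(k+1)/log(1/P(E_k)) < infinity, with log(1/0) = infinity
  (so indices with P(E_k) = 0 contribute 0).\<close>
definition log_sup_finite :: "'w measure \<Rightarrow> (nat \<Rightarrow> 'w set) \<Rightarrow> bool" where
  "log_sup_finite M E \<longleftrightarrow>
     (\<exists>C::real. \<forall>k. measure M (E k) > 0 \<longrightarrow>
        ln (real k + 1) \<le> C * ln (1 / measure M (E k)))"

definition SC :: "'w measure \<Rightarrow> (nat \<Rightarrow> 'w \<Rightarrow> bool) \<Rightarrow> bool" where
  "SC M X \<longleftrightarrow> xi_totally_bounded M X \<and>
     (\<exists>K::nat. K \<ge> 1 \<and> (\<forall>\<epsilon>>0. \<exists>(E :: nat \<Rightarrow> 'w set) (J :: nat set).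
        (\<forall>k. E k \<in> sets M) \<and> finite J \<and>
        (\<forall>k. measure M (E k) \<le> \<epsilon>) \<and>
        log_sup_finite M E \<and>
        (\<forall>i. \<exists>j\<in>J. \<exists>\<K>. finite \<K> \<and> card \<K> \<le> K \<and>
            {\<omega> \<in> space M. X i \<omega> \<noteq> X j \<omega>} \<subseteq> (\<Union>k\<in>\<K>. E k))))"

definition SC' :: "'w measure \<Rightarrow> (nat \<Rightarrow> 'w \<Rightarrow> bool) \<Rightarrow> bool" where
  "SC' M X \<longleftrightarrow> xi_totally_bounded M X \<and>
     (\<exists>K::nat. K \<ge> 1 \<and> (\<forall>\<epsilon>>0. \<exists>(E :: nat \<Rightarrow> 'w set) (J :: nat) (Z :: nat \<Rightarrow> 'w \<Rightarrow> bool).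
        (\<forall>k. E k \<in> sets M) \<and>
        (\<forall>j\<in>{1..J}. Z j \<in> measurable M (count_space UNIV)) \<and>
        (\<forall>k. measure M (E k) \<le> \<epsilon>) \<and>
        log_sup_finite M E \<and>
        (\<forall>i. \<exists>j\<in>{1..J}. \<exists>\<K>. finite \<K> \<and> card \<K> \<le> K \<and>
            {\<omega> \<in> space M. X i \<omega> \<noteq> Z j \<omega>} \<subseteq> (\<Union>k\<in>\<K>. E k))))"

end

theory Submission
  imports Defs
begin

lemma SC_imp_SC':
  fixes M :: "'w measure" and X :: "nat \<Rightarrow> 'w \<Rightarrow> bool"
  assumes "SC M X" and meas: "\<And>i. X i \<in> measurable M (count_space UNIV)" shows "SC' M X"
proof -
  from assms obtain K where tb: "xi_totally_bounded M X" and K: "K \<ge> 1"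
    and H: "\<forall>\<epsilon>>0. \<exists>(E :: nat \<Rightarrow> 'w set) (J :: nat set).
        (\<forall>k. E k \<in> sets M) \<and> finite J \<and>
        (\<forall>k. measure M (E k) \<le> \<epsilon>) \<and>
        log_sup_finite M E \<and>
        (\<forall>i. \<exists>j\<in>J. \<exists>\<K>. finite \<K> \<and> card \<K> \<le> K \<and>
            {\<omega> \<in> space M. X i \<omega> \<noteq> X j \<omega>} \<subseteq> (\<Union>k\<in>\<K>. E k))"
    unfolding SC_def by blast
  have "\<exists>(E :: nat \<Rightarrow> 'w set) (J :: nat) (Z :: nat \<Rightarrow> 'w \<Rightarrow> bool).
        (\<forall>k. E k \<in> sets M) \<and>
        (\<forall>j\<in>{1..J}. Z j \<in> measurable M (count_space UNIV)) \<and>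
        (\<forall>k. measure M (E k) \<le> \<epsilon>) \<and>
        log_sup_finite M E \<and>
        (\<forall>i. \<exists>j\<in>{1..J}. \<exists>\<K>. finite \<K> \<and> card \<K> \<le> K \<and>
            {\<omega> \<in> space M. X i \<omega> \<noteq> Z j \<omega>} \<subseteq> (\<Union>k\<in>\<K>. E k))"
    if eps: "\<epsilon> > 0" for \<epsilon>
  proof -
    obtain E J where E: "\<forall>k. E k \<in> sets M" and fJ: "finite J"
      and m: "\<forall>k. measure M (E k) \<le> \<epsilon>" and l: "log_sup_finite M E"
      and c: "\<forall>i. \<exists>j\<in>J. \<exists>\<K>. finite \<K> \<and> card \<K> \<le> K \<and>
            {\<omega> \<in> space M. X i \<omega> \<noteq> X j \<omega>} \<subseteq> (\<Union>k\<in>\<K>. E k)"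
      using H[rule_format, OF eps] by (elim exE conjE) (rule that; assumption)
    define xs where "xs = sorted_list_of_set J"
    define Z where "Z = (\<lambda>j. X (xs ! (j - 1)))"
    have setxs: "set xs = J" using fJ xs_def by simp
    show ?thesis
    proof (intro exI[of _ E] exI[of _ "length xs"] exI[of _ Z] conjI E m l ballI allI)
      fix j show "Z j \<in> measurable M (count_space UNIV)" using meas by (simp add: Z_def)
    next
      fix i
      obtain j \<K> where "j \<in> J" "finite \<K>" "card \<K> \<le> K"
        "{\<omega> \<in> space M. X i \<omega> \<noteq> X j \<omega>} \<subseteq> (\<Union>k\<in>\<K>. E k)"
        using c[rule_format, of i] by (elim bexE exE conjE) (rule that; assumption)
      moreover obtain n where "n < length xs" "xs ! n = j" using \<open>j \<in> J\<close> setxs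
        by (metis in_set_conv_nth)
      ultimately show "\<exists>j\<in>{1..length xs}. \<exists>\<K>. finite \<K> \<and> card \<K> \<le> K \<and>
            {\<omega> \<in> space M. X i \<omega> \<noteq> Z j \<omega>} \<subseteq> (\<Union>k\<in>\<K>. E k)"
        by (intro bexI[of _ "Suc n"]) (auto simp: Z_def)
    qed
  qed
  note main = this
  show ?thesis unfolding SC'_def
    apply (intro conjI exI[of _ K] tb K allI impI)
    apply (erule main)
    done
qed

lemma SC'_imp_SC:
  fixes M :: "'w measure" and X :: "nat \<Rightarrow> 'w \<Rightarrow> bool"
  assumes "SC' M X" shows "SC M X"
proof -
  from assms obtain K where tb: "xi_totally_bounded M X" and K: "K \<ge> 1"
    and H: "\<forall>\<epsilon>>0. \<exists>(E :: nat \<Rightarrow> 'w set) (J :: nat) (Z :: nat \<Rightarrow> 'w \<Rightarrow> bool).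
        (\<forall>k. E k \<in> sets M) \<and>
        (\<forall>j\<in>{1..J}. Z j \<in> measurable M (count_space UNIV)) \<and>
        (\<forall>k. measure M (E k) \<le> \<epsilon>) \<and>
        log_sup_finite M E \<and>
        (\<forall>i. \<exists>j\<in>{1..J}. \<exists>\<K>. finite \<K> \<and> card \<K> \<le> K \<and>
            {\<omega> \<in> space M. X i \<omega> \<noteq> Z j \<omega>} \<subseteq> (\<Union>k\<in>\<K>. E k))"
    unfolding SC'_def by blast
  have "\<exists>(E :: nat \<Rightarrow> 'w set) (J :: nat set).
        (\<forall>k. E k \<in> sets M) \<and> finite J \<and>
        (\<forall>k. measure M (E k) \<le> \<epsilon>) \<and>
        log_sup_finite M E \<and>
        (\<forall>i. \<exists>j\<in>J. \<exists>\<K>. finite \<K> \<and> card \<K> \<le> 2 * K \<and>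
            {\<omega> \<in> space M. X i \<omega> \<noteq> X j \<omega>} \<subseteq> (\<Union>k\<in>\<K>. E k))"
    if eps: "\<epsilon> > 0" for \<epsilon>
  proof -
    obtain E and J :: nat and Z where E: "\<forall>k. E k \<in> sets M"
      and m: "\<forall>k. measure M (E k) \<le> \<epsilon>" and l: "log_sup_finite M E"
      and c: "\<forall>i. \<exists>j\<in>{1..J}. \<exists>\<K>. finite \<K> \<and> card \<K> \<le> K \<and>
            {\<omega> \<in> space M. X i \<omega> \<noteq> Z j \<omega>} \<subseteq> (\<Union>k\<in>\<K>. E k)"
      using H[rule_format, OF eps] by (elim exE conjE) (rule that; assumption)
    obtain jf KK where jf: "\<And>i. jf i \<in> {1..J}" "\<And>i. finite (KK i)" "\<And>i. card (KK i) \<le> K"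
      "\<And>i. {\<omega> \<in> space M. X i \<omega> \<noteq> Z (jf i) \<omega>} \<subseteq> (\<Union>k\<in>KK i. E k)"
    proof -
      have "\<forall>i. \<exists>p. fst p \<in> {1..J} \<and> finite (snd p) \<and> card (snd p) \<le> K \<and>
            {\<omega> \<in> space M. X i \<omega> \<noteq> Z (fst p) \<omega>} \<subseteq> (\<Union>k\<in>snd p. E k)"
      proof
        fix i
        obtain j KK where "j \<in> {1..J}" "finite KK" "card KK \<le> K"
          "{\<omega> \<in> space M. X i \<omega> \<noteq> Z j \<omega>} \<subseteq> (\<Union>k\<in>KK. E k)"
          using c[rule_format, of i] by (elim bexE exE conjE) (rule that; assumption)
        then show "\<exists>p. fst p \<in> {1..J} \<and> finite (snd p) \<and> card (snd p) \<le> K \<and>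
            {\<omega> \<in> space M. X i \<omega> \<noteq> Z (fst p) \<omega>} \<subseteq> (\<Union>k\<in>snd p. E k)"
          by (intro exI[of _ "(j, KK)"]) simp
      qed
      then obtain p where "\<forall>i. fst (p i) \<in> {1..J} \<and> finite (snd (p i)) \<and> card (snd (p i)) \<le> K \<and>
            {\<omega> \<in> space M. X i \<omega> \<noteq> Z (fst (p i)) \<omega>} \<subseteq> (\<Union>k\<in>snd (p i). E k)"
        by (rule choice[THEN exE])
      then show ?thesis by (intro that[of "\<lambda>i. fst (p i)" "\<lambda>i. snd (p i)"]) auto
    qed
    define r where "r = (\<lambda>j. SOME i. jf i = j)"
    have r: "jf (r (jf i)) = jf i" for i unfolding r_def by (rule someI[of _ i]) (rule refl)
    show ?thesis
    proof (intro exI[of _ E] exI[of _ "r ` jf ` UNIV"] conjI E m l allI)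
      have "jf ` UNIV \<subseteq> {1..J}" using jf(1) by auto
      then show "finite (r ` jf ` UNIV)" using finite_subset by blast
    next
      fix i
      let ?i = "r (jf i)"
      have "{\<omega> \<in> space M. X i \<omega> \<noteq> X ?i \<omega>} \<subseteq>
            {\<omega> \<in> space M. X i \<omega> \<noteq> Z (jf i) \<omega>} \<union> {\<omega> \<in> space M. X ?i \<omega> \<noteq> Z (jf ?i) \<omega>}"
        using r[of i] by auto
      also have "\<dots> \<subseteq> (\<Union>k\<in>KK i \<union> KK ?i. E k)" using jf(4)[of i] jf(4)[of ?i] by blast
      finally have sub: "{\<omega> \<in> space M. X i \<omega> \<noteq> X ?i \<omega>} \<subseteq> (\<Union>k\<in>KK i \<union> KK ?i. E k)" .
      have "card (KK i \<union> KK ?i) \<le> card (KK i) + card (KK ?i)" by (rule card_Un_le)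
      also have "\<dots> \<le> 2 * K" using jf(3)[of i] jf(3)[of ?i] by simp
      finally show "\<exists>j\<in>r ` jf ` UNIV. \<exists>\<K>. finite \<K> \<and> card \<K> \<le> 2 * K \<and>
            {\<omega> \<in> space M. X i \<omega> \<noteq> X j \<omega>} \<subseteq> (\<Union>k\<in>\<K>. E k)"
        using sub jf(2) by (intro bexI[of _ ?i] exI[of _ "KK i \<union> KK ?i"] conjI) auto
    qed
  qed
  note main = this
  have K2: "2 * K \<ge> 1" using K by simp
  show ?thesis unfolding SC_def
    apply (intro conjI exI[of _ "2 * K"] tb K2 allI impI)
    apply (erule main)
    done
qed

theorem proposition20:
  fixes M :: "'w measure" and X :: "nat \<Rightarrow> 'w \<Rightarrow> bool"
  assumes "prob_space M"
    and "\<And>i. X i \<in> measurable M (count_space UNIV)"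
  shows "SC M X \<longleftrightarrow> SC' M X"
proof
  assume "SC M X" then show "SC' M X" by (rule SC_imp_SC') (rule assms(2))
next
  assume "SC' M X" then show "SC M X" by (rule SC'_imp_SC)
qed

end
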